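(* Let $R$ be a uniform $L$-layered $1$-semifield$^\dagger$ and $t\in\mathbb{N}$. If $f=\sum_{i=0}^m\alpha_i\lambda^i\in R[\lambda]$, then $|\Re(f,\lambda^tg)|=\alpha_0^t|\Re(f,g)|$ for every $g\in R[\lambda]$; likewise, if $g=\sum_{i=0}^n\beta_i\lambda^i$, then $|\Re(\lambda^tf,g)|=\beta_0^t|\Re(f,g)|$.
   Context: Concretely, $R=R(L,\mathcal{G})$ with $L$ a totally ordered commutative semiring$^\dagger$ (semiring without necessarily a zero) and $\mathcal{G}$ a totally ordered abelian group; elements $x^{[\ell]}$ ($x\in\mathcal{G}$, layer $\ell$), $x^{[k]}y^{[\ell]}=(xy)^{[k\ell]}$, $x^{[k]}+y^{[\ell]}$ equal to $x^{[k]}$ if $x>y$, $y^{[\ell]}$ if $x<y$, $x^{[k+\ell]}$ if $x=y$; a zero element $\mathbb{0}_R$ is formally adjoined. The layered permanent of an $N\times N$ matrix is $|A|=\sum_{\sigma\in S_N}\prod_i a_{i,\sigma(i)}$. For $f=\sum_{i=0}^m\alpha_i\lambda^i$, $A_n(f)$ is the $n\times(m+n)$ matrix whose $r$-th row is $(\mathbb{0},\dots,\mathbb{0},\alpha_0,\dots,\alpha_m,\mathbb{0},\dots)$ with $r-1$ leading zeros; the Sylvester matrix is $\Re(f,g)=\binom{A_n(f)}{A_m(g)}$ ($\deg f=m$, $\deg g=n$, both $\ge1$), and the layered resultant is $|\Re(f,g)|$; if $f=\alpha_0$ is constant the resultant is $\alpha_0^n$, and symmetrically $\beta_0^m$ if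 $g=\beta_0$ is constant. *)

theory Defs
  imports "HOL-Computational_Algebra.Polynomial" "HOL-Combinatorics.Permutations"
begin

text \<open>The uniform L-layered 1-semifield R(L,G): elements x^[l] (written Lay x l) with x in a
totally ordered abelian group G (written additively) and l in the layering semiring L,
together with a formally adjoined zero LZero.\<close>

datatype ('g, 'l) layered = LZero | Lay 'g 'l

instantiation layered ::
  (linordered_ab_group_add, "{comm_semiring, comm_monoid_mult}") comm_semiring_1
begin

definition zero_layered_def: "0 = LZero"
definition one_layered_def: "1 = Lay 0 1"

fun plus_layered where
  "plus_layered LZero b = b"
| "plus_layered a LZero = a"
| "plus_layered (Lay x k) (Lay y l) =
     (if y < x then Lay x k else if x < y then Lay y l else Lay x (k + l))"

fun times_layered where
  "times_layered LZero b = LZero"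
| "times_layered a LZero = LZero"
| "times_layered (Lay x k) (Lay y l) = Lay (x + y) (k * l)"

instance
proof
  fix a b c :: "('a, 'b) layered"
  show "a + b + c = a + (b + c)"
    by (cases a; cases b; cases c) (auto simp: add.assoc)
  show "a + b = b + a"
    by (cases a; cases b) (auto simp: add.commute)
  show "0 + a = a" by (simp add: zero_layered_def)
  show "a * b * c = a * (b * c)"
    by (cases a; cases b; cases c) (auto simp: add.assoc mult.assoc)
  show "a * b = b * a"
    by (cases a; cases b) (auto simp: add.commute mult.commute)
  show "1 * a = a" by (cases a) (simp_all add: one_layered_def)
  show "0 * a = 0" by (simp add: zero_layered_def)
  show "a * 0 = 0" by (cases a) (simp_all add: zero_layered_def)
  show "(a + b) * c = a * c + b * c"
    by (cases a; cases b; cases c) (auto simp: distrib_right add.commute)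
  show "(0::('a, 'b) layered) \<noteq> 1" by (simp add: zero_layered_def one_layered_def)
qed

end

definition lperm :: "nat \<Rightarrow> (nat \<Rightarrow> nat \<Rightarrow> 'a::comm_semiring_1) \<Rightarrow> 'a" where
  "lperm N A = (\<Sum>\<sigma> \<in> {\<sigma>. \<sigma> permutes {..<N}}. \<Prod>i<N. A i (\<sigma> i))"

text \<open>Sylvester matrix of f (degree m) and g (degree n), 0-indexed, size (m+n) x (m+n):
the first n rows are A_n(f), row r having r leading zeros followed by the coefficients
alpha_0, ..., alpha_m of f; the last m rows are A_m(g) likewise.\<close>
definition sylvester :: "'a::comm_semiring_1 poly \<Rightarrow> 'a poly \<Rightarrow> nat \<Rightarrow> nat \<Rightarrow> 'a" where
  "sylvester f g i j =
     (if i < degree g then (if i \<le> j then coeff f (j - i) else 0)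
      else (if i - degree g \<le> j then coeff g (j - (i - degree g)) else 0))"

definition lresultant :: "'a::comm_semiring_1 poly \<Rightarrow> 'a poly \<Rightarrow> 'a" where
  "lresultant f g =
     (if degree f = 0 then coeff f 0 ^ degree g
      else if degree g = 0 then coeff g 0 ^ degree f
      else lperm (degree f + degree g) (sylvester f g))"

end

theory Submission imports Defs begin

lemma lperm_cong:
  assumes "\<And>i j. i < N \<Longrightarrow> j < N \<Longrightarrow> A i j = B i j"
  shows "lperm N A = lperm N B"
  unfolding lperm_def
proof (rule sum.cong[OF refl], rule prod.cong[OF refl])
  fix \<sigma> i assume s: "\<sigma> \<in> {\<sigma>. \<sigma> permutes {..<N}}" and i: "i \<in> {..<N}"
  then have "\<sigma> i < N" using permutes_in_image[of \<sigma> "{..<N}" i] by auto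
  then show "A i (\<sigma> i) = B i (\<sigma> i)" using assms i by auto
qed

lemma lperm_peel:
  fixes A :: "nat \<Rightarrow> nat \<Rightarrow> 'a::comm_semiring_1"
  assumes r: "r \<le> N" and z: "\<And>i. i \<le> N \<Longrightarrow> i \<noteq> r \<Longrightarrow> A i 0 = 0"
  shows "lperm (Suc N) A = A r 0 * lperm N (\<lambda>i j. A (if i < r then i else Suc i) (Suc j))"
proof -
  define h where "h i = (if i < r then i else Suc i)" for i :: nat
  define g where "g i = (if i < r then i else i - 1)" for i :: nat
  define exf where "exf \<sigma> = (\<lambda>i. if i = r then 0 else if i < Suc N then Suc (\<sigma> (g i)) else i)" for \<sigma> :: "nat \<Rightarrow> nat"
  define res where "res \<tau> = (\<lambda>i. if i < N then \<tau> (h i) - 1 else i)" for \<tau> :: "nat \<Rightarrow> nat"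
  define P where "P = {\<tau>. \<tau> permutes {..<Suc N}}"
  define Q where "Q = {\<tau>. \<tau> permutes {..<Suc N} \<and> \<tau> r = 0}"
  define F where "F \<tau> = (\<Prod>i<Suc N. A i (\<tau> i))" for \<tau>
  have hg: "h (g i) = i" if "i \<noteq> r" for i using that by (auto simp: h_def g_def)
  have gh: "g (h i) = i" for i by (auto simp: h_def g_def)
  have hr: "h i \<noteq> r" for i by (auto simp: h_def)
  have hlt: "i < N \<Longrightarrow> h i < Suc N" for i by (auto simp: h_def)
  have glt: "i < Suc N \<Longrightarrow> i \<noteq> r \<Longrightarrow> g i < N" for i using r by (auto simp: g_def)
  have s1: "lperm (Suc N) A = sum F P" by (simp add: lperm_def F_def P_def)
  have s2: "sum F P = sum F Q"
  proof (rule sum.mono_neutral_right)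
    show "finite P" unfolding P_def by (rule finite_permutations) simp
    show "Q \<subseteq> P" by (auto simp: P_def Q_def)
    show "\<forall>\<tau>\<in>P - Q. F \<tau> = 0"
    proof
      fix \<tau> assume t: "\<tau> \<in> P - Q"
      then have tp: "\<tau> permutes {..<Suc N}" and tr: "\<tau> r \<noteq> 0" by (auto simp: P_def Q_def)
      have "0 \<in> \<tau> ` {..<Suc N}" using permutes_image[OF tp] by auto
      then obtain i where i: "i < Suc N" "\<tau> i = 0" by auto
      with tr have "i \<noteq> r" by auto
      with i z have "A i (\<tau> i) = 0" by auto
      then show "F \<tau> = 0" unfolding F_def using i by (intro prod_zero) (auto intro!: bexI[of _ i])
    qed
  qed
  have s3: "sum F Q = sum (\<lambda>\<sigma>. A r 0 * (\<Prod>i<N. A (h i) (Suc (\<sigma> i)))) {\<sigma>. \<sigma> permutes {..<N}}"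
  proof (rule sym, rule sum.reindex_bij_witness[where i=res and j=exf])
    fix \<sigma> assume "\<sigma> \<in> {\<sigma>. \<sigma> permutes {..<N}}"
    then have sp: "\<sigma> permutes {..<N}" by auto
    have lt: "i < N \<Longrightarrow> \<sigma> i < N" for i using permutes_in_image[OF sp, of i] by auto
    show "res (exf \<sigma>) = \<sigma>"
    proof (rule HOL.ext)
      fix i show "res (exf \<sigma>) i = \<sigma> i"
        using hr[of i] hlt[of i] gh[of i] permutes_not_in[OF sp, of i]
        by (auto simp: exf_def res_def)
    qed
    show "exf \<sigma> \<in> Q"
    proof -
      have "exf \<sigma> permutes {..<Suc N}"
      proof (rule bij_imp_permutes)
        show "x \<notin> {..<Suc N} \<Longrightarrow> exf \<sigma> x = x" for x using r by (auto simp: exf_def)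
        have inj: "inj_on (exf \<sigma>) {..<Suc N}"
        proof (rule inj_onI)
          fix x y assume x: "x \<in> {..<Suc N}" and y: "y \<in> {..<Suc N}" and e: "exf \<sigma> x = exf \<sigma> y"
          show "x = y"
          proof (cases "x = r \<or> y = r")
            case True then show ?thesis using e x y by (auto simp: exf_def split: if_splits)
          next
            case False
            then have "\<sigma> (g x) = \<sigma> (g y)" using e x y by (auto simp: exf_def)
            then have "g x = g y" using permutes_inj[OF sp] by (metis injD)
            then show ?thesis using hg False by metis
          qed
        qed
        have sub: "exf \<sigma> ` {..<Suc N} \<subseteq> {..<Suc N}"
          using lt glt by (auto simp: exf_def)
        show "bij_betw (exf \<sigma>) {..<Suc N} {..<Suc N}"
          using inj endo_inj_surj[OF _ sub inj] by (simp add: bij_betw_def)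
      qed
      then show ?thesis by (simp add: Q_def exf_def)
    qed
  next
    fix \<tau> assume "\<tau> \<in> Q"
    then have tp: "\<tau> permutes {..<Suc N}" and tr: "\<tau> r = 0" by (auto simp: Q_def)
    have nz: "i \<noteq> r \<Longrightarrow> \<tau> i \<noteq> 0" for i using permutes_inj[OF tp] tr by (metis injD)
    have lt: "i < Suc N \<Longrightarrow> \<tau> i < Suc N" for i using permutes_in_image[OF tp, of i] by auto
    show "exf (res \<tau>) = \<tau>"
    proof (rule HOL.ext)
      fix i show "exf (res \<tau>) i = \<tau> i"
        using tr nz[of i] glt[of i] hg[of i] permutes_not_in[OF tp, of i]
        by (auto simp: exf_def res_def)
    qed
    show "res \<tau> \<in> {\<sigma>. \<sigma> permutes {..<N}}"
      unfolding mem_Collect_eq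
    proof (rule bij_imp_permutes)
      show "x \<notin> {..<N} \<Longrightarrow> res \<tau> x = x" for x by (auto simp: res_def)
      have inj: "inj_on (res \<tau>) {..<N}"
      proof (rule inj_onI)
        fix x y assume x: "x \<in> {..<N}" and y: "y \<in> {..<N}" and e: "res \<tau> x = res \<tau> y"
        then have "\<tau> (h x) - 1 = \<tau> (h y) - 1" by (auto simp: res_def)
        with nz[OF hr[of x]] nz[OF hr[of y]] have "\<tau> (h x) = \<tau> (h y)" by linarith
        then have "h x = h y" using permutes_inj[OF tp] by (metis injD)
        then show "x = y" by (metis gh)
      qed
      have sub: "res \<tau> ` {..<N} \<subseteq> {..<N}"
      proof
        fix y assume "y \<in> res \<tau> ` {..<N}"
        then obtain x where x: "x < N" "y = res \<tau> x" by auto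
        then have "\<tau> (h x) < Suc N" using lt hlt by auto
        then show "y \<in> {..<N}" using x nz[OF hr[of x]] by (auto simp: res_def)
      qed
      show "bij_betw (res \<tau>) {..<N} {..<N}"
        using inj endo_inj_surj[OF _ sub inj] by (simp add: bij_betw_def)
    qed
  next
    fix \<sigma> assume "\<sigma> \<in> {\<sigma>. \<sigma> permutes {..<N}}"
    have "F (exf \<sigma>) = A r (exf \<sigma> r) * (\<Prod>i\<in>{..<Suc N} - {r}. A i (exf \<sigma> i))"
      unfolding F_def using r by (subst prod.remove[of _ r]) auto
    also have "(\<Prod>i\<in>{..<Suc N} - {r}. A i (exf \<sigma> i)) = (\<Prod>i<N. A (h i) (exf \<sigma> (h i)))"
    proof (rule prod.reindex_bij_betw[symmetric])
      show "bij_betw h {..<N} ({..<Suc N} - {r})"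
        by (rule bij_betw_byWitness[where f'=g]) (use hg gh hr hlt glt in force)+
    qed
    also have "\<dots> = (\<Prod>i<N. A (h i) (Suc (\<sigma> i)))"
      using hr hlt gh by (intro prod.cong) (auto simp: exf_def)
    finally show "F (exf \<sigma>) = A r 0 * (\<Prod>i<N. A (h i) (Suc (\<sigma> i)))" by (simp add: exf_def)
  qed
  have s4: "sum (\<lambda>\<sigma>. A r 0 * (\<Prod>i<N. A (h i) (Suc (\<sigma> i)))) {\<sigma>. \<sigma> permutes {..<N}} = A r 0 * lperm N (\<lambda>i j. A (if i < r then i else Suc i) (Suc j))"
    by (simp add: lperm_def sum_distrib_left h_def)
  show ?thesis using s1 s2 s3 s4 by simp
qed

lemma lperm_diag:
  fixes A :: "nat \<Rightarrow> nat \<Rightarrow> 'a::comm_semiring_1"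
  assumes "\<And>i j. i < N \<Longrightarrow> j < N \<Longrightarrow> i \<noteq> j \<Longrightarrow> A i j = 0"
  shows "lperm N A = (\<Prod>i<N. A i i)"
  using assms
proof (induction N arbitrary: A)
  case 0 then show ?case by (simp add: lperm_def)
next
  case (Suc N)
  have "lperm (Suc N) A = A 0 0 * lperm N (\<lambda>i j. A (Suc i) (Suc j))"
    using lperm_peel[of 0 N A] Suc.prems by auto
  also have "lperm N (\<lambda>i j. A (Suc i) (Suc j)) = (\<Prod>i<N. A (Suc i) (Suc i))"
    using Suc.prems by (intro Suc.IH) auto
  finally show ?case by (simp only: prod.lessThan_Suc_shift)
qed


lemma coeff_shift: "coeff (monom (1::'a::comm_semiring_1) s * p) k = (if k < s then 0 else coeff p (k - s))"
  by (simp add: coeff_monom_mult)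

lemma degree_shift:
  assumes "p \<noteq> (0::'a::comm_semiring_1 poly)"
  shows "degree (monom 1 s * p) = degree p + s"
proof (rule antisym)
  show "degree (monom 1 s * p) \<le> degree p + s"
    by (rule degree_le) (auto simp: coeff_shift coeff_eq_0)
  show "degree p + s \<le> degree (monom 1 s * p)"
    by (rule le_degree) (simp add: coeff_shift assms)
qed

lemma res_part1:
  fixes f g :: "'a::comm_semiring_1 poly"
  assumes g: "g \<noteq> 0"
  shows "lperm (degree f + (degree g + s)) (sylvester f (monom 1 s * g))
       = coeff f 0 ^ s * lperm (degree f + degree g) (sylvester f g)"
proof (induction s)
  case 0 then show ?case by simp
next
  case (Suc s)
  let ?m = "degree f" and ?n = "degree g"
  have dS: "degree (monom 1 (Suc s) * g) = ?n + Suc s" and ds: "degree (monom 1 s * g) = ?n + s"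
    using degree_shift[OF g] by auto
  have "lperm (?m + (?n + Suc s)) (sylvester f (monom 1 (Suc s) * g))
      = lperm (Suc (?m + (?n + s))) (sylvester f (monom 1 (Suc s) * g))" by simp
  also have "\<dots> = sylvester f (monom 1 (Suc s) * g) 0 0 *
      lperm (?m + (?n + s)) (\<lambda>i j. sylvester f (monom 1 (Suc s) * g) (Suc i) (Suc j))"
    using lperm_peel[of 0 "?m + (?n + s)" "sylvester f (monom 1 (Suc s) * g)"]
    by (simp add: sylvester_def dS coeff_shift)
  also have "lperm (?m + (?n + s)) (\<lambda>i j. sylvester f (monom 1 (Suc s) * g) (Suc i) (Suc j))
      = lperm (?m + (?n + s)) (sylvester f (monom 1 s * g))"
    by (rule lperm_cong) (auto simp: sylvester_def dS ds coeff_shift Suc_diff_le)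
  moreover have "sylvester f (monom 1 (Suc s) * g) 0 0 = coeff f 0" by (simp add: sylvester_def dS)
  ultimately show ?case using Suc.IH by (simp add: mult.assoc)
qed

lemma res_part2:
  fixes f g :: "'a::comm_semiring_1 poly"
  assumes f: "f \<noteq> 0"
  shows "lperm (degree f + s + degree g) (sylvester (monom 1 s * f) g)
       = coeff g 0 ^ s * lperm (degree f + degree g) (sylvester f g)"
proof (induction s)
  case 0 then show ?case by simp
next
  case (Suc s)
  let ?m = "degree f" and ?n = "degree g"
  let ?A = "sylvester (monom 1 (Suc s) * f) g"
  have "lperm (?m + Suc s + ?n) ?A = lperm (Suc (?m + s + ?n)) ?A" by simp
  also have "\<dots> = ?A ?n 0 *
      lperm (?m + s + ?n) (\<lambda>i j. ?A (if i < ?n then i else Suc i) (Suc j))"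
    by (rule lperm_peel) (auto simp: sylvester_def coeff_shift)
  also have "lperm (?m + s + ?n) (\<lambda>i j. ?A (if i < ?n then i else Suc i) (Suc j))
      = lperm (?m + s + ?n) (sylvester (monom 1 s * f) g)"
    by (rule lperm_cong) (auto simp: sylvester_def coeff_shift Suc_diff_le)
  moreover have "?A ?n 0 = coeff g 0" by (simp add: sylvester_def)
  ultimately show ?case using Suc.IH by (simp add: mult.assoc)
qed

lemma diag_g:
  fixes f g :: "'a::comm_semiring_1 poly"
  assumes "degree g = 0"
  shows "lperm N (sylvester f g) = coeff g 0 ^ N"
proof -
  have "lperm N (sylvester f g) = (\<Prod>i<N. sylvester f g i i)"
    by (rule lperm_diag) (auto simp: sylvester_def assms coeff_eq_0)
  then show ?thesis by (simp add: sylvester_def assms)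
qed

lemma diag_f:
  fixes f g :: "'a::comm_semiring_1 poly"
  assumes "degree f = 0"
  shows "lperm (degree g) (sylvester f g) = coeff f 0 ^ degree g"
proof -
  have "lperm (degree g) (sylvester f g) = (\<Prod>i<degree g. sylvester f g i i)"
    by (rule lperm_diag) (auto simp: sylvester_def assms coeff_eq_0)
  then show ?thesis by (simp add: sylvester_def assms)
qed

theorem corollary8p19:
  fixes f g :: "('g::linordered_ab_group_add,
                 'l::{comm_semiring, comm_monoid_mult, linorder, ordered_ab_semigroup_add}) layered poly"
    and t :: nat
  shows "(g \<noteq> 0 \<longrightarrow> lresultant f (monom 1 t * g) = coeff f 0 ^ t * lresultant f g)
       \<and> (f \<noteq> 0 \<longrightarrow> lresultant (monom 1 t * f) g = coeff g 0 ^ t * lresultant f g)"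
proof (intro conjI impI)
  assume g: "g \<noteq> 0"
  have d: "degree (monom 1 t * g) = degree g + t" by (rule degree_shift[OF g])
  show "lresultant f (monom 1 t * g) = coeff f 0 ^ t * lresultant f g"
  proof (cases "degree f = 0")
    case True then show ?thesis unfolding lresultant_def d by (simp add: power_add mult.commute)
  next
    case False
    show ?thesis
    proof (cases "degree g + t = 0")
      case True then show ?thesis by simp
    next
      case False2: False
      have "lresultant f (monom 1 t * g) = lperm (degree f + (degree g + t)) (sylvester f (monom 1 t * g))"
        using False False2 by (auto simp: lresultant_def d)
      also have "\<dots> = coeff f 0 ^ t * lperm (degree f + degree g) (sylvester f g)"
        by (rule res_part1[OF g])
      also have "lperm (degree f + degree g) (sylvester f g) = lresultant f g"
        using False by (cases "degree g = 0") (simp_all add: lresultant_def diag_g)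
      finally show ?thesis .
    qed
  qed
next
  assume f: "f \<noteq> 0"
  have d: "degree (monom 1 t * f) = degree f + t" by (rule degree_shift[OF f])
  show "lresultant (monom 1 t * f) g = coeff g 0 ^ t * lresultant f g"
  proof (cases "degree f + t = 0")
    case True then show ?thesis by simp
  next
    case False
    show ?thesis
    proof (cases "degree g = 0")
      case True then show ?thesis using False
        unfolding lresultant_def d by (auto simp: power_add mult.commute)
    next
      case False2: False
      have "lresultant (monom 1 t * f) g = lperm (degree f + t + degree g) (sylvester (monom 1 t * f) g)"
        using False False2 by (auto simp: lresultant_def d)
      also have "\<dots> = coeff g 0 ^ t * lperm (degree f + degree g) (sylvester f g)"
        by (rule res_part2[OF f])
      also have "lperm (degree f + degree g) (sylvester f g) = lresultant f g"
        using False2 by (cases "degree f = 0") (simp_all add: lresultant_def diag_f)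
      finally show ?thesis .
    qed
  qed
qed

end
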